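(* Let $A = \mathrm{diag}(a_1,\dots,a_n)$ with $a_i > 0$, $\Sigma$ a diagonal positive semidefinite matrix, and $0 < \gamma < 1/\max_i a_i$. Consider the noisy quadratic model with stochastic loss $\hat L(x) = \frac{1}{2}(x - c)^T A (x - c)$, $c \sim \mathcal{N}(0,\Sigma)$ sampled independently at each step. SGD with learning rate $\gamma$ is $x_{t+1} = x_t - \gamma A(x_t - c_t)$. Lookahead with inner optimizer SGD (learning rate $\gamma$), $k \ge 1$ inner steps and step size $\alpha \in (0,1]$ is: $\theta_{t,0} = \phi_t$, $\theta_{t,i} = \theta_{t,i-1} - \gamma A(\theta_{t,i-1} - c_{t,i})$ for $i=1,\dots,k$, $\phi_{t+1} = (1-\alpha)\phi_t + \alpha\theta_{t,k}$. Then the expectations of both the SGD iterates $x_t$ and the Lookahead slow weights $\phi_t$ converge to $0$, and their coordinatewise variances (as diagonal matrices) converge to unique fixed points $V^*_{SGD}$ and $V^*_{LA}$ respectively, where $$V^*_{SGD} = \frac{\gamma^2 A^2 \Sigma}{I - (I - \gamma A)^2},$$ $$V^*_{LA} = \frac{\alpha^2\big(I - (I-\gamma A)^{2k}\big)}{\alpha^2\big(I - (I-\gamma A)^{2k}\big) + 2\alpha(1-\alpha)\big(I - (I-\gamma A)^k\big)}\, V^*_{SGD},$$ all operations being coordinatewise on diagonal matrices.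
   Context: All matrices are diagonal and fractions of diagonal matrices denote coordinatewise division. *)

theory Defs
  imports "HOL-Probability.Probability"
begin

text \<open>Diagonal matrices are represented by their diagonal vectors in real^'n;
  all operations are coordinatewise.\<close>

definition gauss_measure :: "real \<Rightarrow> real measure" where
  "gauss_measure s = (if s = 0 then return borel 0
                      else density lborel (normal_density 0 (sqrt s)))"

primrec sgd_iter :: "real \<Rightarrow> real^'n \<Rightarrow> real^'n \<Rightarrow> (nat \<Rightarrow> real^'n) \<Rightarrow> nat \<Rightarrow> real^'n" where
  "sgd_iter \<gamma> a x0 c 0 = x0"
| "sgd_iter \<gamma> a x0 c (Suc t) =
     (\<chi> j. sgd_iter \<gamma> a x0 c t $ j - \<gamma> * a $ j * (sgd_iter \<gamma> a x0 c t $ j - c t $ j))"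

primrec la_inner :: "real \<Rightarrow> real^'n \<Rightarrow> real^'n \<Rightarrow> (nat \<Rightarrow> real^'n) \<Rightarrow> nat \<Rightarrow> real^'n" where
  "la_inner \<gamma> a \<theta>0 c 0 = \<theta>0"
| "la_inner \<gamma> a \<theta>0 c (Suc i) =
     (\<chi> j. la_inner \<gamma> a \<theta>0 c i $ j - \<gamma> * a $ j * (la_inner \<gamma> a \<theta>0 c i $ j - c (Suc i) $ j))"

primrec la_slow :: "real \<Rightarrow> real \<Rightarrow> nat \<Rightarrow> real^'n \<Rightarrow> real^'n \<Rightarrow> (nat \<Rightarrow> nat \<Rightarrow> real^'n) \<Rightarrow> nat \<Rightarrow> real^'n" where
  "la_slow \<gamma> \<alpha> k a \<phi>0 c 0 = \<phi>0"
| "la_slow \<gamma> \<alpha> k a \<phi>0 c (Suc t) =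
     (1 - \<alpha>) *\<^sub>R la_slow \<gamma> \<alpha> k a \<phi>0 c t + \<alpha> *\<^sub>R la_inner \<gamma> a (la_slow \<gamma> \<alpha> k a \<phi>0 c t) (c t) k"

definition V_SGD :: "real \<Rightarrow> real^'n \<Rightarrow> real^'n \<Rightarrow> real^'n" where
  "V_SGD \<gamma> a s = (\<chi> j. \<gamma>\<^sup>2 * (a $ j)\<^sup>2 * s $ j / (1 - (1 - \<gamma> * a $ j)\<^sup>2))"

definition V_LA :: "real \<Rightarrow> real \<Rightarrow> nat \<Rightarrow> real^'n \<Rightarrow> real^'n \<Rightarrow> real^'n" where
  "V_LA \<gamma> \<alpha> k a s = (\<chi> j.
     \<alpha>\<^sup>2 * (1 - (1 - \<gamma> * a $ j) ^ (2 * k)) /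
     (\<alpha>\<^sup>2 * (1 - (1 - \<gamma> * a $ j) ^ (2 * k)) + 2 * \<alpha> * (1 - \<alpha>) * (1 - (1 - \<gamma> * a $ j) ^ k))
     * V_SGD \<gamma> a s $ j)"

end

theory Submission
  imports Defs
begin

lemma gauss_facts:
  assumes "\<sigma> \<ge> 0"
  shows "integrable (gauss_measure \<sigma>) (\<lambda>x. x) \<and> integrable (gauss_measure \<sigma>) (\<lambda>x. x^2)
    \<and> integral\<^sup>L (gauss_measure \<sigma>) (\<lambda>x. x) = 0 \<and> integral\<^sup>L (gauss_measure \<sigma>) (\<lambda>x. x^2) = \<sigma>"
proof (cases "\<sigma> = 0")
  case True
  have i: "integrable (return borel (0::real)) f" if "f \<in> borel_measurable borel" for f :: "real \<Rightarrow> real"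
    using that by (simp add: integrable_iff_bounded nn_integral_return)
  show ?thesis using True by (simp add: gauss_measure_def i integral_return)
next
  case False
  then have sp: "sqrt \<sigma> > 0" using assms by simp
  have g: "gauss_measure \<sigma> = density lborel (\<lambda>x. ennreal (normal_density 0 (sqrt \<sigma>) x))"
    using False by (simp add: gauss_measure_def)
  have i1: "integrable lborel (\<lambda>x. normal_density 0 (sqrt \<sigma>) x * x)"
    using integrable_normal_moment_nz_1[OF sp] .
  have i2: "integrable lborel (\<lambda>x. normal_density 0 (sqrt \<sigma>) x * x^2)"
    using integrable_normal_moment[OF sp, of 0 2] by simp
  have e1: "integral\<^sup>L lborel (\<lambda>x. normal_density 0 (sqrt \<sigma>) x * x) = 0"
    using integral_normal_moment_nz_1[OF sp, of 0] .
  have e2: "integral\<^sup>L lborel (\<lambda>x. normal_density 0 (sqrt \<sigma>) x * x^2) = \<sigma>"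
    using integral_normal_moment_even[OF sp, of 0 1] sp assms by (simp add: power2_eq_square)
  show ?thesis unfolding g
    by (simp add: integrable_real_density integral_real_density i1 i2 e1 e2)
qed

lemma (in prob_space) gauss_rv:
  assumes "X \<in> borel_measurable M" "distr M borel X = gauss_measure \<sigma>" "\<sigma> \<ge> 0"
  shows "integrable M X \<and> integrable M (\<lambda>\<omega>. (X \<omega>)^2) \<and> expectation X = 0 \<and> expectation (\<lambda>\<omega>. (X \<omega>)^2) = \<sigma>"
proof -
  note G = gauss_facts[OF assms(3), folded assms(2)]
  show ?thesis using G
    by (simp add: integrable_distr_eq[OF assms(1)] integral_distr[OF assms(1)])
qed

lemma (in prob_space) indep_vars_pair:
  assumes "indep_vars (\<lambda>_. borel) X I" "p \<in> I" "q \<in> I" "p \<noteq> q"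
  shows "indep_var borel (X p) borel (X q)"
proof -
  have "indep_var
    borel ((\<lambda>f. f p) \<circ> (\<lambda>\<omega>. restrict (\<lambda>i. X i \<omega>) {p}))
    borel ((\<lambda>f. f q) \<circ> (\<lambda>\<omega>. restrict (\<lambda>i. X i \<omega>) {q}))"
    using assms by (intro indep_var_compose[OF indep_var_restrict[OF assms(1)]]) auto
  also have "((\<lambda>f. f p) \<circ> (\<lambda>\<omega>. restrict (\<lambda>i. X i \<omega>) {p})) = X p" by auto
  also have "((\<lambda>f. f q) \<circ> (\<lambda>\<omega>. restrict (\<lambda>i. X i \<omega>) {q})) = X q" by auto
  finally show ?thesis .
qed


lemma (in prob_space) lin_comb_moments:
  fixes e :: "'i \<Rightarrow> 'a \<Rightarrow> real"
  assumes fin: "finite I"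
  and int1: "\<And>p. p\<in>I \<Longrightarrow> integrable M (e p)"
  and intp: "\<And>p q. p\<in>I \<Longrightarrow> q\<in>I \<Longrightarrow> integrable M (\<lambda>\<omega>. e p \<omega> * e q \<omega>)"
  and mean: "\<And>p. p\<in>I \<Longrightarrow> expectation (e p) = 0"
  and cov: "\<And>p q. p\<in>I \<Longrightarrow> q\<in>I \<Longrightarrow> expectation (\<lambda>\<omega>. e p \<omega> * e q \<omega>) = (if p = q then \<sigma> else 0)"
  and X: "\<And>\<omega>. X \<omega> = m + (\<Sum>p\<in>I. w p * e p \<omega>)"
  shows "expectation X = m \<and> expectation (\<lambda>\<omega>. (X \<omega> - expectation X)^2) = \<sigma> * (\<Sum>p\<in>I. (w p)^2)"
proof -
  have XX: "X = (\<lambda>\<omega>. m + (\<Sum>p\<in>I. w p * e p \<omega>))" using X by auto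
  have isum: "integrable M (\<lambda>\<omega>. \<Sum>p\<in>I. w p * e p \<omega>)"
    using int1 by (intro Bochner_Integration.integrable_sum) auto
  have "expectation (\<lambda>\<omega>. \<Sum>p\<in>I. w p * e p \<omega>) = (\<Sum>p\<in>I. expectation (\<lambda>\<omega>. w p * e p \<omega>))"
    using int1 by (intro Bochner_Integration.integral_sum) auto
  also have "\<dots> = 0" using mean by simp
  finally have s0: "expectation (\<lambda>\<omega>. \<Sum>p\<in>I. w p * e p \<omega>) = 0" .
  have EX: "expectation X = m"
    unfolding XX using isum s0 prob_space by (simp add: Bochner_Integration.integral_add)
  have sq: "(X \<omega> - m)^2 = (\<Sum>p\<in>I. \<Sum>q\<in>I. (w p * w q) * (e p \<omega> * e q \<omega>))" for \<omega>
    unfolding X power2_eq_square by (simp add: sum_product algebra_simps)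
  have "expectation (\<lambda>\<omega>. (X \<omega> - m)^2) = (\<Sum>p\<in>I. \<Sum>q\<in>I. (w p * w q) * expectation (\<lambda>\<omega>. e p \<omega> * e q \<omega>))"
    unfolding sq using intp
    by (simp add: Bochner_Integration.integral_sum Bochner_Integration.integrable_sum)
  also have "\<dots> = (\<Sum>p\<in>I. \<Sum>q\<in>I. (w p * w q) * (if p = q then \<sigma> else 0))"
    using cov by (intro sum.cong refl) auto
  also have "\<dots> = \<sigma> * (\<Sum>p\<in>I. (w p)^2)"
    using fin by (simp add: if_distrib sum.delta sum_distrib_left power2_eq_square mult_ac cong: if_cong)
  finally show ?thesis using EX by simp
qed

lemma (in prob_space) noise_facts:
  fixes Z :: "'i \<Rightarrow> 'a \<Rightarrow> real"
  assumes ind: "indep_vars (\<lambda>_. borel) Z UNIV"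
  and law: "\<And>p. distr M borel (Z p) = gauss_measure \<sigma>" and s: "\<sigma> \<ge> 0"
  shows "integrable M (Z p)" "integrable M (\<lambda>\<omega>. Z p \<omega> * Z q \<omega>)" "expectation (Z p) = 0"
    "expectation (\<lambda>\<omega>. Z p \<omega> * Z q \<omega>) = (if p = q then \<sigma> else 0)"
proof -
  have meas: "Z p \<in> borel_measurable M" for p using ind unfolding indep_vars_def by auto
  note G = gauss_rv[OF meas law s]
  show "integrable M (Z p)" "expectation (Z p) = 0" using G by auto
  show "integrable M (\<lambda>\<omega>. Z p \<omega> * Z q \<omega>)"
  proof (cases "p = q")
    case True then show ?thesis using G[of p] by (simp add: power2_eq_square)
  next
    case False then show ?thesis using G indep_var_integrable indep_vars_pair[OF ind] by blast
  qed
  show "expectation (\<lambda>\<omega>. Z p \<omega> * Z q \<omega>) = (if p = q then \<sigma> else 0)"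
  proof (cases "p = q")
    case True then show ?thesis using G[of p] by (simp add: power2_eq_square)
  next
    case False then show ?thesis
      using G[of p] G[of q] indep_var_lebesgue_integral[OF indep_vars_pair[OF ind _ _ False]] by simp
  qed
qed


lemma sgd_repr:
  "sgd_iter \<gamma> a x0 c t $ j = (1 - \<gamma> * a $ j)^t * x0 $ j
     + (\<Sum>i<t. (\<gamma> * a $ j * (1 - \<gamma> * a $ j)^(t - 1 - i)) * c i $ j)"
proof (induction t)
  case 0 then show ?case by simp
next
  case (Suc t)
  let ?b = "1 - \<gamma> * a $ j"
  have "(\<Sum>i<Suc t. (\<gamma> * a $ j * ?b^(Suc t - 1 - i)) * c i $ j)
     = ?b * (\<Sum>i<t. (\<gamma> * a $ j * ?b^(t - 1 - i)) * c i $ j) + \<gamma> * a $ j * c t $ j"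
  proof -
    have "(\<Sum>i<t. (\<gamma> * a $ j * ?b^(Suc t - 1 - i)) * c i $ j)
        = (\<Sum>i<t. ?b * ((\<gamma> * a $ j * ?b^(t - 1 - i)) * c i $ j))"
    proof (intro sum.cong refl)
      fix i assume "i \<in> {..<t}"
      then have "Suc t - 1 - i = Suc (t - 1 - i)" by auto
      then show "(\<gamma> * a $ j * ?b^(Suc t - 1 - i)) * c i $ j = ?b * ((\<gamma> * a $ j * ?b^(t - 1 - i)) * c i $ j)"
        by simp
    qed
    then show ?thesis by (simp add: sum_distrib_left)
  qed
  then show ?case using Suc by (simp add: algebra_simps)
qed

lemma la_inner_repr:
  "la_inner \<gamma> a \<theta> c k $ j = (1 - \<gamma> * a $ j)^k * \<theta> $ j
     + (\<Sum>i\<in>{1..k}. (\<gamma> * a $ j * (1 - \<gamma> * a $ j)^(k - i)) * c i $ j)"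
proof (induction k)
  case 0 then show ?case by simp
next
  case (Suc k)
  let ?b = "1 - \<gamma> * a $ j"
  have "(\<Sum>i\<in>{1..Suc k}. (\<gamma> * a $ j * ?b^(Suc k - i)) * c i $ j)
     = ?b * (\<Sum>i\<in>{1..k}. (\<gamma> * a $ j * ?b^(k - i)) * c i $ j) + \<gamma> * a $ j * c (Suc k) $ j"
  proof -
    have "(\<Sum>i\<in>{1..k}. (\<gamma> * a $ j * ?b^(Suc k - i)) * c i $ j)
        = (\<Sum>i\<in>{1..k}. ?b * ((\<gamma> * a $ j * ?b^(k - i)) * c i $ j))"
    proof (intro sum.cong refl)
      fix i assume "i \<in> {1..k}"
      then have "Suc k - i = Suc (k - i)" by auto
      then show "(\<gamma> * a $ j * ?b^(Suc k - i)) * c i $ j = ?b * ((\<gamma> * a $ j * ?b^(k - i)) * c i $ j)"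
        by simp
    qed
    then show ?thesis by (simp add: sum_distrib_left)
  qed
  then show ?case using Suc by (simp add: algebra_simps)
qed

lemma la_slow_repr:
  "la_slow \<gamma> \<alpha> k a \<phi>0 c t $ j = (1 - \<alpha> + \<alpha> * (1 - \<gamma> * a $ j)^k)^t * \<phi>0 $ j
     + (\<Sum>t'<t. \<Sum>i\<in>{1..k}. ((1 - \<alpha> + \<alpha> * (1 - \<gamma> * a $ j)^k)^(t - 1 - t')
          * (\<alpha> * \<gamma> * a $ j * (1 - \<gamma> * a $ j)^(k - i))) * c t' i $ j)"
proof (induction t)
  case 0 then show ?case by simp
next
  case (Suc t)
  let ?b = "1 - \<gamma> * a $ j"
  let ?r = "1 - \<alpha> + \<alpha> * (1 - \<gamma> * a $ j)^k"
  let ?S = "\<lambda>t. (\<Sum>t'<t. \<Sum>i\<in>{1..k}. (?r^(t - 1 - t') * (\<alpha> * \<gamma> * a $ j * ?b^(k - i))) * c t' i $ j)"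
  have "?S (Suc t) = ?r * ?S t + (\<Sum>i\<in>{1..k}. (\<alpha> * \<gamma> * a $ j * ?b^(k - i)) * c t i $ j)"
  proof -
    have "(\<Sum>t'<t. \<Sum>i\<in>{1..k}. (?r^(Suc t - 1 - t') * (\<alpha> * \<gamma> * a $ j * ?b^(k - i))) * c t' i $ j)
        = (\<Sum>t'<t. ?r * (\<Sum>i\<in>{1..k}. (?r^(t - 1 - t') * (\<alpha> * \<gamma> * a $ j * ?b^(k - i))) * c t' i $ j))"
    proof (intro sum.cong refl)
      fix t' assume "t' \<in> {..<t}"
      then have "Suc t - 1 - t' = Suc (t - 1 - t')" by auto
      then show "(\<Sum>i\<in>{1..k}. (?r^(Suc t - 1 - t') * (\<alpha> * \<gamma> * a $ j * ?b^(k - i))) * c t' i $ j)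
         = ?r * (\<Sum>i\<in>{1..k}. (?r^(t - 1 - t') * (\<alpha> * \<gamma> * a $ j * ?b^(k - i))) * c t' i $ j)"
        by (simp add: sum_distrib_left mult_ac)
    qed
    then show ?thesis by (simp add: sum_distrib_left)
  qed
  moreover have "la_slow \<gamma> \<alpha> k a \<phi>0 c (Suc t) $ j = (1 - \<alpha>) * la_slow \<gamma> \<alpha> k a \<phi>0 c t $ j
     + \<alpha> * (?b^k * la_slow \<gamma> \<alpha> k a \<phi>0 c t $ j + (\<Sum>i\<in>{1..k}. (\<gamma> * a $ j * ?b^(k - i)) * c t i $ j))"
    by (simp add: la_inner_repr)
  moreover have "\<alpha> * (\<Sum>i\<in>{1..k}. (\<gamma> * a $ j * ?b^(k - i)) * c t i $ j)
      = (\<Sum>i\<in>{1..k}. (\<alpha> * \<gamma> * a $ j * ?b^(k - i)) * c t i $ j)"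
    by (simp add: sum_distrib_left mult_ac)
  ultimately have "la_slow \<gamma> \<alpha> k a \<phi>0 c (Suc t) $ j = ?r * la_slow \<gamma> \<alpha> k a \<phi>0 c t $ j
      + (\<Sum>i\<in>{1..k}. (\<alpha> * \<gamma> * a $ j * ?b^(k - i)) * c t i $ j)"
    by (simp add: algebra_simps)
  also have "\<dots> = ?r * (?r^t * \<phi>0 $ j + ?S t) + (\<Sum>i\<in>{1..k}. (\<alpha> * \<gamma> * a $ j * ?b^(k - i)) * c t i $ j)"
    using Suc by simp
  also have "\<dots> = ?r^Suc t * \<phi>0 $ j + ?S (Suc t)"
    using \<open>?S (Suc t) = _\<close> by (simp add: algebra_simps)
  finally show ?case .
qed


lemma sum_rev_pow: "(\<Sum>i\<in>{1..k}. (x::real)^(k-i)) = (\<Sum>i<k. x^i)"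
  by (rule sum.reindex_bij_witness[of _ "\<lambda>m. k - m" "\<lambda>i. k - i"]) auto

lemma geom_lim: "\<bar>x::real\<bar> < 1 \<Longrightarrow> (\<lambda>t. \<Sum>i<t. x^i) \<longlonglongrightarrow> 1 / (1 - x)"
  using geometric_sums[of x] by (simp add: sums_def)

theorem proposition2:
  fixes M :: "'w measure"
    and a s x0 \<phi>0 :: "real^'n"
    and \<gamma> \<alpha> :: real and k :: nat
    and cS :: "nat \<Rightarrow> 'w \<Rightarrow> real^'n"
    and cL :: "nat \<Rightarrow> nat \<Rightarrow> 'w \<Rightarrow> real^'n"
  assumes "prob_space M"
    and a_pos: "\<forall>j. a $ j > 0"
    and s_nonneg: "\<forall>j. s $ j \<ge> 0"
    and \<gamma>_pos: "0 < \<gamma>" and \<gamma>_bound: "\<gamma> < 1 / (MAX j\<in>UNIV. a $ j)"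
    and k_pos: "k \<ge> 1"
    and \<alpha>_range: "0 < \<alpha>" "\<alpha> \<le> 1"
    \<comment> \<open>SGD noise: c_t i.i.d. N(0, diag s)\<close>
    and cS_indep: "prob_space.indep_vars M (\<lambda>_. borel) cS UNIV"
    and cS_coord_indep: "\<forall>t. prob_space.indep_vars M (\<lambda>_. borel) (\<lambda>j \<omega>. cS t \<omega> $ j) UNIV"
    and cS_law: "\<forall>t j. distr M borel (\<lambda>\<omega>. cS t \<omega> $ j) = gauss_measure (s $ j)"
    \<comment> \<open>Lookahead noise: c_{t,i} i.i.d. N(0, diag s)\<close>
    and cL_indep: "prob_space.indep_vars M (\<lambda>_. borel) (\<lambda>(t, i). cL t i) UNIV"
    and cL_coord_indep: "\<forall>t i. prob_space.indep_vars M (\<lambda>_. borel) (\<lambda>j \<omega>. cL t i \<omega> $ j) UNIV"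
    and cL_law: "\<forall>t i j. distr M borel (\<lambda>\<omega>. cL t i \<omega> $ j) = gauss_measure (s $ j)"
  shows
    "(\<forall>j. (\<lambda>t. integral\<^sup>L M (\<lambda>\<omega>. sgd_iter \<gamma> a x0 (\<lambda>t. cS t \<omega>) t $ j)) \<longlonglongrightarrow> 0)
   \<and> (\<forall>j. (\<lambda>t. integral\<^sup>L M (\<lambda>\<omega>. (sgd_iter \<gamma> a x0 (\<lambda>t. cS t \<omega>) t $ j
              - integral\<^sup>L M (\<lambda>\<omega>'. sgd_iter \<gamma> a x0 (\<lambda>t. cS t \<omega>') t $ j))\<^sup>2))
          \<longlonglongrightarrow> V_SGD \<gamma> a s $ j)
   \<and> (\<forall>j. (\<lambda>t. integral\<^sup>L M (\<lambda>\<omega>. la_slow \<gamma> \<alpha> k a \<phi>0 (\<lambda>t i. cL t i \<omega>) t $ j)) \<longlonglongrightarrow> 0)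
   \<and> (\<forall>j. (\<lambda>t. integral\<^sup>L M (\<lambda>\<omega>. (la_slow \<gamma> \<alpha> k a \<phi>0 (\<lambda>t i. cL t i \<omega>) t $ j
              - integral\<^sup>L M (\<lambda>\<omega>'. la_slow \<gamma> \<alpha> k a \<phi>0 (\<lambda>t i. cL t i \<omega>') t $ j))\<^sup>2))
          \<longlonglongrightarrow> V_LA \<gamma> \<alpha> k a s $ j)"
proof -
  interpret P: prob_space M by fact
  have per_j: "((\<lambda>t. integral\<^sup>L M (\<lambda>\<omega>. sgd_iter \<gamma> a x0 (\<lambda>t. cS t \<omega>) t $ j)) \<longlonglongrightarrow> 0)
   \<and> ((\<lambda>t. integral\<^sup>L M (\<lambda>\<omega>. (sgd_iter \<gamma> a x0 (\<lambda>t. cS t \<omega>) t $ j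
              - integral\<^sup>L M (\<lambda>\<omega>'. sgd_iter \<gamma> a x0 (\<lambda>t. cS t \<omega>') t $ j))\<^sup>2))
          \<longlonglongrightarrow> V_SGD \<gamma> a s $ j)
   \<and> ((\<lambda>t. integral\<^sup>L M (\<lambda>\<omega>. la_slow \<gamma> \<alpha> k a \<phi>0 (\<lambda>t i. cL t i \<omega>) t $ j)) \<longlonglongrightarrow> 0)
   \<and> ((\<lambda>t. integral\<^sup>L M (\<lambda>\<omega>. (la_slow \<gamma> \<alpha> k a \<phi>0 (\<lambda>t i. cL t i \<omega>) t $ j
              - integral\<^sup>L M (\<lambda>\<omega>'. la_slow \<gamma> \<alpha> k a \<phi>0 (\<lambda>t i. cL t i \<omega>') t $ j))\<^sup>2))
          \<longlonglongrightarrow> V_LA \<gamma> \<alpha> k a s $ j)" for j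
  proof -
    define b where "b = 1 - \<gamma> * a $ j"
    define g where "g = \<gamma> * a $ j"
    define \<sigma> where "\<sigma> = s $ j"
    have \<sigma>0: "\<sigma> \<ge> 0" using s_nonneg by (simp add: \<sigma>_def)
    have aj: "a $ j > 0" using a_pos by simp
    have mx: "a $ j \<le> (MAX j\<in>UNIV. a $ j)" by (rule Max_ge) auto
    have mxp: "(MAX j\<in>UNIV. a $ j) > 0" using aj mx by linarith
    have "\<gamma> * (MAX j\<in>UNIV. a $ j) < 1" using \<gamma>_bound mxp by (simp add: pos_less_divide_eq)
    moreover have "\<gamma> * a $ j \<le> \<gamma> * (MAX j\<in>UNIV. a $ j)" using mx \<gamma>_pos by simp
    ultimately have g1: "g < 1" by (simp add: g_def)
    have g0: "g > 0" using \<gamma>_pos aj by (simp add: g_def)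
    have b0: "0 < b" "b < 1" using g0 g1 by (auto simp: b_def g_def)
    have bb: "\<bar>b^2\<bar> < 1" using b0 by (simp add: abs_less_iff power_less_one_iff)
    define Z where "Z = (\<lambda>i \<omega>. cS i \<omega> $ j)"
    have Zind: "P.indep_vars (\<lambda>_. borel) Z UNIV"
      unfolding Z_def by (rule P.indep_vars_compose2[OF cS_indep]) simp
    have Zlaw: "distr M borel (Z i) = gauss_measure \<sigma>" for i
      using cS_law by (simp add: Z_def \<sigma>_def)
    note NZ = P.noise_facts[OF Zind Zlaw \<sigma>0]
    have SG: "P.expectation (\<lambda>\<omega>. sgd_iter \<gamma> a x0 (\<lambda>t. cS t \<omega>) t $ j) = b^t * x0 $ j \<and>
       P.expectation (\<lambda>\<omega>. (sgd_iter \<gamma> a x0 (\<lambda>t. cS t \<omega>) t $ j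
          - P.expectation (\<lambda>\<omega>'. sgd_iter \<gamma> a x0 (\<lambda>t. cS t \<omega>') t $ j))\<^sup>2)
        = \<sigma> * (\<Sum>i<t. (g * b^(t - 1 - i))^2)" for t
      by (rule P.lin_comb_moments[where e=Z and I="{..<t}"])
         (auto simp: NZ[unfolded Z_def] sgd_repr Z_def b_def g_def)
    have sq1: "(\<Sum>i<t. (g * b^(t - 1 - i))^2) = g^2 * (\<Sum>i<t. (b^2)^i)" for t
    proof -
      have "(\<Sum>i<t. (g * b^(t - 1 - i))^2) = g^2 * (\<Sum>i<t. (b^2)^(t - Suc i))"
        by (simp add: sum_distrib_left power_mult_distrib power_mult[symmetric] mult.commute)
      also have "\<dots> = g^2 * (\<Sum>i<t. (b^2)^i)"
        by (subst sum.nat_diff_reindex[where g="\<lambda>i. (b^2)^i"]) simp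
      finally show ?thesis .
    qed
    have L1: "(\<lambda>t. P.expectation (\<lambda>\<omega>. sgd_iter \<gamma> a x0 (\<lambda>t. cS t \<omega>) t $ j)) \<longlonglongrightarrow> 0"
      unfolding SG[THEN conjunct1]
      using LIMSEQ_power_zero[of b] b0 by (intro tendsto_mult_left_zero) auto
    have "(\<lambda>t. \<sigma> * (g^2 * (\<Sum>i<t. (b^2)^i))) \<longlonglongrightarrow> \<sigma> * (g^2 * (1 / (1 - b^2)))"
      by (intro tendsto_mult_left geom_lim bb)
    also have "\<sigma> * (g^2 * (1 / (1 - b^2))) = V_SGD \<gamma> a s $ j"
      by (simp add: V_SGD_def \<sigma>_def g_def b_def power_mult_distrib)
    finally have L2: "(\<lambda>t. P.expectation (\<lambda>\<omega>. (sgd_iter \<gamma> a x0 (\<lambda>t. cS t \<omega>) t $ j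
          - P.expectation (\<lambda>\<omega>'. sgd_iter \<gamma> a x0 (\<lambda>t. cS t \<omega>') t $ j))\<^sup>2)) \<longlonglongrightarrow> V_SGD \<gamma> a s $ j"
      unfolding SG[THEN conjunct2] sq1 .
    define y where "y = b^k"
    define r where "r = 1 - \<alpha> + \<alpha> * y"
    have y0: "0 < y" "y < 1" using b0 k_pos by (auto simp: y_def power_less_one_iff)
    have r0: "0 < r" "r < 1"
    proof -
      have "\<alpha> * (1 - y) > 0" using y0 \<alpha>_range by simp
      moreover have "\<alpha> * (1 - y) < 1"
      proof -
        have "\<alpha> * (1 - y) \<le> 1 - y" using mult_right_mono[of \<alpha> 1 "1-y"] y0 \<alpha>_range by simp
        then show ?thesis using y0 by linarith
      qed
      ultimately show "0 < r" "r < 1" by (auto simp: r_def algebra_simps)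
    qed
    have rr: "\<bar>r^2\<bar> < 1" using r0 by (simp add: abs_less_iff power_less_one_iff)
    define W where "W = (\<lambda>p \<omega>. (\<lambda>(t, i). cL t i) p \<omega> $ j)"
    have Wind: "P.indep_vars (\<lambda>_. borel) W UNIV"
      unfolding W_def by (rule P.indep_vars_compose2[OF cL_indep]) simp
    have Wlaw: "distr M borel (W p) = gauss_measure \<sigma>" for p
      using cL_law by (cases p) (simp add: W_def \<sigma>_def)
    note NW = P.noise_facts[OF Wind Wlaw \<sigma>0]
    define w where "w = (\<lambda>t (p::nat \<times> nat). r^(t - 1 - fst p) * (\<alpha> * g * b^(k - snd p)))"
    have LA: "P.expectation (\<lambda>\<omega>. la_slow \<gamma> \<alpha> k a \<phi>0 (\<lambda>t i. cL t i \<omega>) t $ j) = r^t * \<phi>0 $ j \<and>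
       P.expectation (\<lambda>\<omega>. (la_slow \<gamma> \<alpha> k a \<phi>0 (\<lambda>t i. cL t i \<omega>) t $ j
          - P.expectation (\<lambda>\<omega>'. la_slow \<gamma> \<alpha> k a \<phi>0 (\<lambda>t i. cL t i \<omega>') t $ j))\<^sup>2)
        = \<sigma> * (\<Sum>p\<in>{..<t} \<times> {1..k}. (w t p)^2)" for t
    proof (rule P.lin_comb_moments[where e=W and I="{..<t} \<times> {1..k}"])
      fix \<omega>
      show "la_slow \<gamma> \<alpha> k a \<phi>0 (\<lambda>t i. cL t i \<omega>) t $ j = r^t * \<phi>0 $ j + (\<Sum>p\<in>{..<t} \<times> {1..k}. w t p * W p \<omega>)"
      proof -
        have "(\<Sum>p\<in>{..<t} \<times> {1..k}. w t p * W p \<omega>) = (\<Sum>t'<t. \<Sum>i\<in>{1..k}. w t (t',i) * W (t',i) \<omega>)"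
          by (simp add: sum.cartesian_product)
        then show ?thesis
          unfolding la_slow_repr
          by (simp add: w_def W_def r_def y_def b_def g_def mult_ac)
      qed
    qed (auto simp: NW)
    have sq2: "(\<Sum>p\<in>{..<t} \<times> {1..k}. (w t p)^2) = (\<alpha> * g)^2 * (\<Sum>i<t. (r^2)^i) * (\<Sum>i<k. (b^2)^i)" for t
    proof -
      have "(\<Sum>p\<in>{..<t} \<times> {1..k}. (w t p)^2) = (\<Sum>t'<t. \<Sum>i\<in>{1..k}. (w t (t',i))^2)"
        by (simp add: sum.cartesian_product)
      also have "\<dots> = (\<alpha> * g)^2 * (\<Sum>t'<t. (r^2)^(t - Suc t')) * (\<Sum>i\<in>{1..k}. (b^2)^(k - i))"
        by (simp add: w_def sum_distrib_left sum_distrib_right power_mult_distrib power_mult[symmetric] mult.commute mult.left_commute)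
      also have "\<dots> = (\<alpha> * g)^2 * (\<Sum>i<t. (r^2)^i) * (\<Sum>i<k. (b^2)^i)"
        by (subst sum.nat_diff_reindex[where g="\<lambda>i. (r^2)^i"]) (use sum_rev_pow[of "b^2" k] in simp)
      finally show ?thesis .
    qed
    have L3: "(\<lambda>t. P.expectation (\<lambda>\<omega>. la_slow \<gamma> \<alpha> k a \<phi>0 (\<lambda>t i. cL t i \<omega>) t $ j)) \<longlonglongrightarrow> 0"
      unfolding LA[THEN conjunct1]
      using LIMSEQ_power_zero[of r] r0 by (intro tendsto_mult_left_zero) auto
    have "(\<lambda>t. \<sigma> * ((\<alpha> * g)^2 * (\<Sum>i<t. (r^2)^i) * (\<Sum>i<k. (b^2)^i)))
        \<longlonglongrightarrow> \<sigma> * ((\<alpha> * g)^2 * (1 / (1 - r^2)) * (\<Sum>i<k. (b^2)^i))"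
      by (intro tendsto_intros geom_lim rr)
    also have "\<sigma> * ((\<alpha> * g)^2 * (1 / (1 - r^2)) * (\<Sum>i<k. (b^2)^i)) = V_LA \<gamma> \<alpha> k a s $ j"
    proof -
      have b2: "b^2 \<noteq> 1" using bb by auto
      have bk: "(b^2)^k = y^2" by (simp add: y_def power_mult[symmetric] mult.commute)
      have b2k: "(1 - \<gamma> * a $ j)^(2*k) = y^2" using bk by (simp add: b_def g_def power_mult)
      have bk1: "(1 - \<gamma> * a $ j)^k = y" by (simp add: y_def b_def)
      have D: "\<alpha>\<^sup>2 * (1 - y^2) + 2 * \<alpha> * (1 - \<alpha>) * (1 - y) = 1 - r^2"
        by (simp add: r_def power2_eq_square algebra_simps)
      have D0: "1 - r^2 \<noteq> 0" using rr by auto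
      have b20: "1 - b^2 \<noteq> 0" using b2 by auto
      have bk': "b^(2*k) = y^2" by (simp add: y_def power_mult[symmetric] mult.commute)
      have V1: "V_LA \<gamma> \<alpha> k a s $ j = \<alpha>\<^sup>2 * (1 - y^2) / (1 - r^2) * (g^2 * \<sigma> / (1 - b^2))"
        unfolding V_LA_def V_SGD_def vec_lambda_beta b_def[symmetric] bk' y_def[symmetric] D
        by (simp add: g_def \<sigma>_def power_mult_distrib y_def)
      have S: "(\<Sum>i<k. (b^2)^i) = (1 - y^2) / (1 - b^2)" using b2 bk by (simp add: sum_gp_strict)
      show ?thesis unfolding V1 S using D0 b20 by (simp add: field_simps power_mult_distrib)
    qed
    finally have L4: "(\<lambda>t. P.expectation (\<lambda>\<omega>. (la_slow \<gamma> \<alpha> k a \<phi>0 (\<lambda>t i. cL t i \<omega>) t $ j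
          - P.expectation (\<lambda>\<omega>'. la_slow \<gamma> \<alpha> k a \<phi>0 (\<lambda>t i. cL t i \<omega>') t $ j))\<^sup>2)) \<longlonglongrightarrow> V_LA \<gamma> \<alpha> k a s $ j"
      unfolding LA[THEN conjunct2] sq2 .
    show ?thesis using L1 L2 L3 L4 by blast
  qed
  show ?thesis using per_j by blast
qed

end
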